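(* Let $\Gamma=(V,E)$ and $\Gamma'=(V',E')$ be layered graphs with unique minimal vertices such that $\Gamma\sim_A\Gamma'$. Then $|V_i|=|V_i'|$ for all $i\in\mathbb N$.
   Context: A layered graph is a finite directed graph $\Gamma=(V,E)$ with $V=\bigsqcup_{i=0}^{N}V_i$ such that every edge from $V_i$ goes to $V_{i-1}$; $|v|=i$ for $v\in V_i$, $V_+=\bigsqcup_{i\ge1}V_i$, every vertex in $V_+$ has at least one outgoing edge, and unique minimal vertex means $|V_0|=1$. The universal labeling algebra $A(\Gamma)$ is presented as $T(V_+)/R_V$ (free algebra on $V_+$ over a field $\mathbb F$ modulo an ideal $R_V$ which is homogeneous for the polynomial degree). The degree grading of $A(\Gamma)$ is $A(\Gamma)_{[i]}$ = span of images of monomials $v_1\cdots v_i$ ($v_j\in V_+$). The vertex filtration is $A(\Gamma)_i$ = span of images of monomials $v_1\cdots v_j$ with $\sum_k|v_k|\le i$. One writes $\Gamma\sim_A\Gamma'$ if there is an algebra isomorphism $A(\Gamma)\to A(\Gamma')$ preserving both the degree grading and the vertex filtration. *)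

theory Defs
  imports Main
begin

text \<open>A layered graph is given by a finite vertex set V, an edge relation E
  (edges (v,w) go from v to w) and a level function lev, with V_i = {v in V. lev v = i}.\<close>

definition layered_graph :: "'a set \<Rightarrow> ('a \<times> 'a) set \<Rightarrow> ('a \<Rightarrow> nat) \<Rightarrow> bool" where
  "layered_graph V E lev \<longleftrightarrow>
     finite V \<and> E \<subseteq> V \<times> V \<and>
     (\<forall>(v,w)\<in>E. lev v = Suc (lev w)) \<and>
     (\<forall>v\<in>V. lev v \<ge> 1 \<longrightarrow> (\<exists>w. (v,w) \<in> E))"

definition level :: "'a set \<Rightarrow> ('a \<Rightarrow> nat) \<Rightarrow> nat \<Rightarrow> 'a set" where
  "level V lev i = {v\<in>V. lev v = i}"

definition Vplus :: "'a set \<Rightarrow> ('a \<Rightarrow> nat) \<Rightarrow> 'a set" where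
  "Vplus V lev = {v\<in>V. lev v \<ge> 1}"

definition unique_min :: "'a set \<Rightarrow> ('a \<Rightarrow> nat) \<Rightarrow> bool" where
  "unique_min V lev \<longleftrightarrow> card (level V lev 0) = 1"

text \<open>Noncommutative polynomials: coefficient functions on words.\<close>

type_synonym ('v,'f) ncp = "'v list \<Rightarrow> 'f"

definition nc_in :: "'v set \<Rightarrow> ('v,'f::field) ncp \<Rightarrow> bool" where
  "nc_in X p \<longleftrightarrow> finite {w. p w \<noteq> 0} \<and> (\<forall>w. p w \<noteq> 0 \<longrightarrow> set w \<subseteq> X)"

definition nc_zero :: "('v,'f::field) ncp" where
  "nc_zero = (\<lambda>w. 0)"

definition nc_one :: "('v,'f::field) ncp" where
  "nc_one = (\<lambda>w. if w = [] then 1 else 0)"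

definition nc_var :: "'v \<Rightarrow> ('v,'f::field) ncp" where
  "nc_var x = (\<lambda>w. if w = [x] then 1 else 0)"

definition nc_add :: "('v,'f::field) ncp \<Rightarrow> ('v,'f) ncp \<Rightarrow> ('v,'f) ncp" where
  "nc_add p q = (\<lambda>w. p w + q w)"

definition nc_diff :: "('v,'f::field) ncp \<Rightarrow> ('v,'f) ncp \<Rightarrow> ('v,'f) ncp" where
  "nc_diff p q = (\<lambda>w. p w - q w)"

definition nc_mul :: "('v,'f::field) ncp \<Rightarrow> ('v,'f) ncp \<Rightarrow> ('v,'f) ncp" where
  "nc_mul p q = (\<lambda>w. \<Sum>i\<le>length w. p (take i w) * q (drop i w))"

fun nc_prod :: "('v,'f::field) ncp list \<Rightarrow> ('v,'f) ncp" where
  "nc_prod [] = nc_one"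
| "nc_prod (p # ps) = nc_mul p (nc_prod ps)"

inductive_set nc_ideal :: "'v set \<Rightarrow> ('v,'f::field) ncp set \<Rightarrow> ('v,'f) ncp set"
  for X :: "'v set" and R :: "('v,'f) ncp set" where
  gen: "r \<in> R \<Longrightarrow> r \<in> nc_ideal X R"
| zero: "nc_zero \<in> nc_ideal X R"
| add: "p \<in> nc_ideal X R \<Longrightarrow> q \<in> nc_ideal X R \<Longrightarrow> nc_add p q \<in> nc_ideal X R"
| lmul: "p \<in> nc_ideal X R \<Longrightarrow> nc_in X a \<Longrightarrow> nc_mul a p \<in> nc_ideal X R"
| rmul: "p \<in> nc_ideal X R \<Longrightarrow> nc_in X a \<Longrightarrow> nc_mul p a \<in> nc_ideal X R"

definition nc_subst :: "('v \<Rightarrow> ('u,'f::field) ncp) \<Rightarrow> ('v,'f) ncp \<Rightarrow> ('u,'f) ncp" where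
  "nc_subst g p = (\<lambda>u. \<Sum>w\<in>{w. p w \<noteq> 0}. p w * nc_prod (map g w) u)"

section \<open>The universal labeling algebra A(Gamma) = T(V_+)/R_V\<close>

text \<open>Ordered elementary symmetric functions: esym j [a1,...,ak] is the sum of all
  products a_{i1}...a_{ij} with i1 < ... < ij, so that
  (t - a1)...(t - ak) = sum_j (-1)^j esym j [a1..ak] t^(k-j) for central t.\<close>

fun esym :: "nat \<Rightarrow> ('v,'f::field) ncp list \<Rightarrow> ('v,'f) ncp" where
  "esym 0 as = nc_one"
| "esym (Suc j) [] = nc_zero"
| "esym (Suc j) (a # as) = nc_add (nc_mul a (esym j as)) (esym (Suc j) as)"

definition vgen :: "('a \<Rightarrow> nat) \<Rightarrow> 'a \<Rightarrow> ('a,'f::field) ncp" where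
  "vgen lev x = (if lev x \<ge> 1 then nc_var x else nc_zero)"

definition path_down :: "('a \<times> 'a) set \<Rightarrow> ('a \<Rightarrow> nat) \<Rightarrow> 'a \<Rightarrow> 'a list \<Rightarrow> bool" where
  "path_down E lev v ps \<longleftrightarrow> ps \<noteq> [] \<and> hd ps = v \<and> lev (last ps) = 0 \<and>
     (\<forall>i. Suc i < length ps \<longrightarrow> (ps ! i, ps ! Suc i) \<in> E)"

definition edge_labels :: "('a \<Rightarrow> nat) \<Rightarrow> 'a list \<Rightarrow> ('a,'f::field) ncp list" where
  "edge_labels lev ps = map (\<lambda>i. nc_diff (vgen lev (ps ! i)) (vgen lev (ps ! Suc i)))
                           [0..<length ps - 1]"

text \<open>Relations: for every v and any two paths from v down to level 0, the polynomials
  prod (t - label) agree, i.e. all their coefficients esym j agree.\<close>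

definition rel_gens :: "'a set \<Rightarrow> ('a \<times> 'a) set \<Rightarrow> ('a \<Rightarrow> nat) \<Rightarrow> ('a,'f::field) ncp set" where
  "rel_gens V E lev = {nc_diff (esym j (edge_labels lev p1)) (esym j (edge_labels lev p2)) |
      v p1 p2 j. v \<in> Vplus V lev \<and> path_down E lev v p1 \<and> path_down E lev v p2}"

definition R_V :: "'a set \<Rightarrow> ('a \<times> 'a) set \<Rightarrow> ('a \<Rightarrow> nat) \<Rightarrow> ('a,'f::field) ncp set" where
  "R_V V E lev = nc_ideal (Vplus V lev) (rel_gens V E lev)"

text \<open>Preimages in T(V_+) of the degree component A_[i] and of the filtration piece A_i.\<close>

definition deg_span :: "'a set \<Rightarrow> ('a \<Rightarrow> nat) \<Rightarrow> nat \<Rightarrow> ('a,'f::field) ncp set" where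
  "deg_span V lev i = {p. nc_in (Vplus V lev) p \<and> (\<forall>w. p w \<noteq> 0 \<longrightarrow> length w = i)}"

definition filt_span :: "'a set \<Rightarrow> ('a \<Rightarrow> nat) \<Rightarrow> nat \<Rightarrow> ('a,'f::field) ncp set" where
  "filt_span V lev i = {p. nc_in (Vplus V lev) p \<and> (\<forall>w. p w \<noteq> 0 \<longrightarrow> sum_list (map lev w) \<le> i)}"

text \<open>Gamma ~_A Gamma': an algebra isomorphism A(Gamma) -> A(Gamma') (with inverse)
  preserving the degree grading and the vertex filtration. Homomorphisms
  A(Gamma) -> A(Gamma') are induced by substitutions g of the generators that map
  R_V into R_V'.\<close>

definition sim_A :: "'f::field itself \<Rightarrow> 'a set \<Rightarrow> ('a \<times> 'a) set \<Rightarrow> ('a \<Rightarrow> nat) \<Rightarrow>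
     'b set \<Rightarrow> ('b \<times> 'b) set \<Rightarrow> ('b \<Rightarrow> nat) \<Rightarrow> bool" where
  "sim_A (_::'f itself) V E lev V' E' lev' \<longleftrightarrow>
    (\<exists>(g :: 'a \<Rightarrow> ('b,'f) ncp) (h :: 'b \<Rightarrow> ('a,'f) ncp).
      (\<forall>x\<in>Vplus V lev. nc_in (Vplus V' lev') (g x)) \<and>
      (\<forall>x\<in>Vplus V' lev'. nc_in (Vplus V lev) (h x)) \<and>
      (\<forall>r\<in>R_V V E lev. nc_subst g r \<in> R_V V' E' lev') \<and>
      (\<forall>r\<in>R_V V' E' lev'. nc_subst h r \<in> R_V V E lev) \<and>
      (\<forall>p. nc_in (Vplus V lev) p \<longrightarrow> nc_diff (nc_subst h (nc_subst g p)) p \<in> R_V V E lev) \<and>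
      (\<forall>p. nc_in (Vplus V' lev') p \<longrightarrow> nc_diff (nc_subst g (nc_subst h p)) p \<in> R_V V' E' lev') \<and>
      (\<forall>i. \<forall>p\<in>deg_span V lev i. \<exists>q\<in>deg_span V' lev' i. nc_diff (nc_subst g p) q \<in> R_V V' E' lev') \<and>
      (\<forall>i. \<forall>p\<in>deg_span V' lev' i. \<exists>q\<in>deg_span V lev i. nc_diff (nc_subst h p) q \<in> R_V V E lev) \<and>
      (\<forall>i. \<forall>p\<in>filt_span V lev i. \<exists>q\<in>filt_span V' lev' i. nc_diff (nc_subst g p) q \<in> R_V V' E' lev') \<and>
      (\<forall>i. \<forall>p\<in>filt_span V' lev' i. \<exists>q\<in>filt_span V lev i. nc_diff (nc_subst h p) q \<in> R_V V E lev))"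

end

theory Submission
  imports Defs "HOL-Library.Function_Algebras" "HOL.Vector_Spaces"
begin
lemma sum_apply: "finite A \<Longrightarrow> (\<Sum>x\<in>A. f x) y = (\<Sum>x\<in>A. f x y)"
  by (induction A rule: finite_induct) auto

lemma card_le_lin:
  fixes C :: "'a \<Rightarrow> 'b \<Rightarrow> 'f::field" and D :: "'b \<Rightarrow> 'a \<Rightarrow> 'f"
  assumes fA: "finite A" and fB: "finite B"
    and supp: "\<And>x y. x \<in> A \<Longrightarrow> C x y \<noteq> 0 \<Longrightarrow> y \<in> B"
    and inv: "\<And>x z. x \<in> A \<Longrightarrow> z \<in> A \<Longrightarrow> (\<Sum>y\<in>B. C x y * D y z) = (if x = z then 1 else 0)"
  shows "card A \<le> card B"
proof -
  interpret V: vector_space "\<lambda>(c::'f) (f::'b\<Rightarrow>'f). (\<lambda>y. c * f y)"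
    by unfold_locales (auto simp: fun_eq_iff algebra_simps)
  define e where "e = (\<lambda>y::'b. \<lambda>b. if b = y then (1::'f) else 0)"
  have injC: "inj_on C A"
  proof (rule inj_onI)
    fix x x' assume x: "x \<in> A" and x': "x' \<in> A" and eq: "C x = C x'"
    have "(\<Sum>y\<in>B. C x y * D y x) = (\<Sum>y\<in>B. C x' y * D y x)" using eq by simp
    then show "x = x'" using inv[OF x x] inv[OF x' x] by (auto split: if_splits)
  qed
  have span: "C ` A \<subseteq> V.span (e ` B)"
  proof
    fix v assume "v \<in> C ` A"
    then obtain x where x: "x \<in> A" and v: "v = C x" by auto
    have "v = (\<Sum>y\<in>B. (\<lambda>b. C x y * e y b))"
    proof
      fix b
      have "(\<Sum>y\<in>B. (\<lambda>b. C x y * e y b)) b = (\<Sum>y\<in>B. C x y * e y b)"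
        using fB by (simp add: sum_apply)
      also have "\<dots> = (if b \<in> B then C x b else 0)"
        using fB by (simp add: e_def if_distrib sum.delta cong: if_cong)
      also have "\<dots> = C x b" using supp[OF x, of b] by auto
      finally show "v b = (\<Sum>y\<in>B. (\<lambda>b. C x y * e y b)) b" using v by simp
    qed
    also have "\<dots> \<in> V.span (e ` B)"
      by (intro V.span_sum V.span_scale V.span_base) auto
    finally show "v \<in> V.span (e ` B)" .
  qed
  have ind: "V.independent (C ` A)"
  proof -
    have "\<not> V.dependent (C ` A)"
    proof
      assume "V.dependent (C ` A)"
      then obtain t u where t: "finite t" "t \<subseteq> C ` A"
        and s: "(\<Sum>v\<in>t. (\<lambda>y. u v * v y)) = 0" and nz: "\<exists>v\<in>t. u v \<noteq> 0"
        unfolding V.dependent_explicit by blast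
      obtain A0 where A0: "A0 \<subseteq> A" "t = C ` A0" using t(2) by (meson subset_imageE)
      have inj0: "inj_on C A0" using injC A0(1) inj_on_subset by blast
      have fA0: "finite A0" using A0(1) fA finite_subset by blast
      from nz A0 obtain z where z: "z \<in> A0" "u (C z) \<noteq> 0" by auto
      have s2: "\<And>y. (\<Sum>x\<in>A0. u (C x) * C x y) = 0"
      proof -
        fix y
        have "(\<Sum>v\<in>t. (\<lambda>y. u v * v y)) y = 0" using s by simp
        then show "(\<Sum>x\<in>A0. u (C x) * C x y) = 0"
          using A0(2) fA0 by (simp add: sum_apply sum.reindex[OF inj0])
      qed
      have "0 = (\<Sum>y\<in>B. (\<Sum>x\<in>A0. u (C x) * C x y) * D y z)" using s2 by simp
      also have "\<dots> = (\<Sum>x\<in>A0. u (C x) * (\<Sum>y\<in>B. C x y * D y z))"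
        by (simp add: sum_distrib_left sum_distrib_right sum.swap[of _ B] mult.assoc)
      also have "\<dots> = (\<Sum>x\<in>A0. u (C x) * (if x = z then 1 else 0))"
        using A0(1) z(1) inv by (intro sum.cong) (auto simp: subset_iff)
      also have "\<dots> = u (C z)" using z(1) fA0 by (simp add: if_distrib sum.delta cong: if_cong)
      finally show False using z(2) by simp
    qed
    then show ?thesis .
  qed
  have "card (C ` A) \<le> card (e ` B)"
    using V.independent_span_bound[OF _ ind span] fB by auto
  also have "\<dots> \<le> card B" by (rule card_image_le[OF fB])
  finally show ?thesis using card_image[OF injC] by simp
qed
definition low :: "('v,'f::field) ncp \<Rightarrow> bool" where
  "low p \<longleftrightarrow> (\<forall>w. length w \<le> 1 \<longrightarrow> p w = 0)"

lemma len_le1: "length w \<le> 1 \<Longrightarrow> w = [] \<or> (\<exists>x. w = [x])"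
  by (cases w) auto

lemma len_le1': "length w \<le> Suc 0 \<Longrightarrow> w = [] \<or> (\<exists>x. w = [x])"
  by (cases w) auto

lemma nc_mul_Nil: "nc_mul p q [] = p [] * q []"
  by (simp add: nc_mul_def)

lemma nc_mul_single: "nc_mul p q [x] = p [] * q [x] + p [x] * q []"
  by (simp add: nc_mul_def)

lemma nc_mul_one: "nc_mul p nc_one = p"
proof
  fix w
  have "nc_mul p nc_one w = (\<Sum>i\<le>length w. if i = length w then p w else 0)"
    unfolding nc_mul_def nc_one_def by (intro sum.cong) auto
  then show "nc_mul p nc_one w = p w" by simp
qed

lemma low_ideal: "r \<in> nc_ideal X R \<Longrightarrow> (\<And>r. r \<in> R \<Longrightarrow> low r) \<Longrightarrow> low r"
proof (induction rule: nc_ideal.induct)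
  case (gen r) then show ?case by auto
next
  case zero then show ?case by (simp add: low_def nc_zero_def)
next
  case (add p q) then show ?case by (simp add: low_def nc_add_def)
next
  case (lmul p a)
  then show ?case unfolding low_def
    by (auto dest!: len_le1' simp: nc_mul_Nil nc_mul_single)
next
  case (rmul p a)
  then show ?case unfolding low_def
    by (auto dest!: len_le1' simp: nc_mul_Nil nc_mul_single)
qed

lemma esym_Nil: "\<forall>a\<in>set as. a [] = 0 \<Longrightarrow> esym (Suc j) as [] = 0"
  by (induction as arbitrary: j) (auto simp: nc_zero_def nc_add_def nc_mul_Nil)

lemma esym_single2: "\<forall>a\<in>set as. a [] = 0 \<Longrightarrow> esym (Suc (Suc j)) as [x] = 0"
proof (induction as arbitrary: j)
  case Nil then show ?case by (simp add: nc_zero_def)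
next
  case (Cons a as)
  then show ?case using esym_Nil[of as j]
    by (simp add: nc_add_def nc_mul_single)
qed

lemma esym1_Cons: "esym (Suc 0) (a # as) [x] = a [x] + esym (Suc 0) as [x]"
  by (simp add: nc_add_def nc_mul_one)

lemma edge_labels_single: "edge_labels lev [a] = []"
  by (simp add: edge_labels_def)

lemma edge_labels_Cons2: "edge_labels lev (a # b # rest) =
   nc_diff (vgen lev a) (vgen lev b) # edge_labels lev (b # rest)"
proof -
  have "[0..<length (a # b # rest) - 1] = 0 # map Suc [0..<length (b # rest) - 1]"
    by (simp add: upt_conv_Cons map_Suc_upt del: upt_Suc)
  then show ?thesis unfolding edge_labels_def by simp
qed

lemma edge_labels_c0: "\<forall>a\<in>set (edge_labels lev ps). a [] = 0"
  by (auto simp: edge_labels_def nc_diff_def vgen_def nc_var_def nc_zero_def)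

lemma esym1_tele: "ps \<noteq> [] \<Longrightarrow>
  (esym (Suc 0) (edge_labels lev ps) [x] :: 'f::field) = vgen lev (hd ps) [x] - vgen lev (last ps) [x]"
proof (induction ps)
  case Nil then show ?case by simp
next
  case (Cons a ps)
  show ?case
  proof (cases ps)
    case Nil then show ?thesis by (simp add: edge_labels_single nc_zero_def)
  next
    case (Cons b rest)
    have eq: "(esym (Suc 0) (edge_labels lev (a#ps)) [x] :: 'f) =
       (vgen lev a [x] - vgen lev b [x]) + esym (Suc 0) (edge_labels lev ps) [x]"
      unfolding \<open>ps = b # rest\<close>
      by (simp only: edge_labels_Cons2 esym1_Cons) (simp add: nc_diff_def)
    have ne: "ps \<noteq> []" and hb: "hd ps = b" using \<open>ps = b # rest\<close> by auto
    have IH: "(esym (Suc 0) (edge_labels lev ps) [x] :: 'f) = vgen lev b [x] - vgen lev (last ps) [x]"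
      using Cons.IH ne hb by simp
    show ?thesis using eq IH ne by simp
  qed
qed

lemma vgen_zero: "lev x = 0 \<Longrightarrow> vgen lev x = nc_zero"
  by (simp add: vgen_def)

lemma gen_low:
  assumes "path_down E lev v p1" "path_down E lev v p2"
  shows "low (nc_diff (esym j (edge_labels lev p1)) (esym j (edge_labels lev p2)) :: ('a,'f::field) ncp)"
  unfolding low_def
proof (intro allI impI)
  fix w :: "'a list" assume "length w \<le> 1"
  then consider "w = []" | x where "w = [x]" using len_le1 by blast
  then show "nc_diff (esym j (edge_labels lev p1)) (esym j (edge_labels lev p2)) w = (0::'f)"
  proof cases
    case 1
    show ?thesis
    proof (cases j)
      case 0 then show ?thesis by (simp add: nc_diff_def)
    next
      case (Suc k)
      have "esym (Suc k) (edge_labels lev p1) w = (0::'f)" "esym (Suc k) (edge_labels lev p2) w = (0::'f)"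
        unfolding 1 by (rule esym_Nil[OF edge_labels_c0])+
      then show ?thesis using 1 Suc by (simp add: nc_diff_def)
    qed
  next
    case (2 x)
    show ?thesis
    proof (cases j)
      case 0 then show ?thesis by (simp add: nc_diff_def)
    next
      case (Suc k)
      show ?thesis
      proof (cases k)
        case 0
        then show ?thesis using assms Suc 2
          by (simp add: esym1_tele path_down_def nc_diff_def vgen_zero)
      next
        case (Suc m)
        have "esym (Suc (Suc m)) (edge_labels lev p1) [x] = (0::'f)"
             "esym (Suc (Suc m)) (edge_labels lev p2) [x] = (0::'f)"
          by (rule esym_single2[OF edge_labels_c0])+
        then show ?thesis using \<open>j = Suc k\<close> 2 Suc
          by (simp add: nc_diff_def)
      qed
    qed
  qed
qed

lemma R_low: "r \<in> R_V V E lev \<Longrightarrow> length w \<le> 1 \<Longrightarrow> r w = 0"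
proof -
  assume r: "r \<in> R_V V E lev" and w: "length w \<le> 1"
  have "low r" using r unfolding R_V_def
    by (rule low_ideal) (auto simp: rel_gens_def intro: gen_low)
  then show ?thesis using w by (simp add: low_def)
qed

lemma supp_var: "{w. nc_var x w \<noteq> (0::'f::field)} = {[x]}"
  by (auto simp: nc_var_def)

lemma subst_var: "nc_subst g (nc_var x) = g x"
  by (rule ext) (simp add: nc_subst_def supp_var nc_mul_one, simp add: nc_var_def)

lemma nc_in_var: "x \<in> X \<Longrightarrow> nc_in X (nc_var x :: ('v,'f::field) ncp)"
  by (auto simp: nc_in_def supp_var nc_var_def split: if_splits)

lemma prod_short: "\<forall>p\<in>set ps. p [] = 0 \<Longrightarrow> length w < length ps \<Longrightarrow> nc_prod ps w = 0"
proof (induction ps arbitrary: w)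
  case Nil then show ?case by simp
next
  case (Cons p ps)
  have "nc_mul p (nc_prod ps) w = (\<Sum>i\<le>length w. 0)"
    unfolding nc_mul_def
  proof (intro sum.cong refl)
    fix i assume "i \<in> {..length w}"
    show "p (take i w) * nc_prod ps (drop i w) = 0"
    proof (cases i)
      case 0 then show ?thesis using Cons.prems by simp
    next
      case (Suc k)
      then have "length (drop i w) < length ps" using Cons.prems(2) \<open>i \<in> {..length w}\<close> by auto
      then show ?thesis using Cons.IH Cons.prems by simp
    qed
  qed
  then show ?case by simp
qed

lemma subst_lin:
  assumes P: "nc_in X P" and fX: "finite X" and h0: "\<forall>y\<in>X. h y [] = 0"
  shows "nc_subst h P [z] = (\<Sum>y\<in>X. P [y] * h y [z])"
proof -
  define S where "S = {w. P w \<noteq> 0}"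
  have fS: "finite S" and sS: "\<And>w. w \<in> S \<Longrightarrow> set w \<subseteq> X" using P by (auto simp: nc_in_def S_def)
  define S1 where "S1 = {y\<in>X. P [y] \<noteq> 0}"
  have "nc_subst h P [z] = (\<Sum>w\<in>S. P w * nc_prod (map h w) [z])"
    by (simp add: nc_subst_def S_def)
  also have "\<dots> = (\<Sum>w\<in>S. if length w = 1 then P w * h (hd w) [z] else 0)"
  proof (intro sum.cong refl)
    fix w assume w: "w \<in> S"
    show "P w * nc_prod (map h w) [z] = (if length w = 1 then P w * h (hd w) [z] else 0)"
    proof (cases w)
      case Nil then show ?thesis by (simp add: nc_one_def)
    next
      case (Cons y r)
      show ?thesis
      proof (cases r)
        case Nil then show ?thesis using Cons by (simp add: nc_mul_one)
      next
        case (Cons y' r')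
        have "nc_prod (map h w) [z] = 0"
          using sS[OF w] h0 \<open>w = y # r\<close> Cons by (intro prod_short) auto
        then show ?thesis using \<open>w = y # r\<close> Cons by simp
      qed
    qed
  qed
  also have "\<dots> = (\<Sum>w\<in>(\<lambda>y. [y]) ` S1. if length w = 1 then P w * h (hd w) [z] else 0)"
  proof (rule sum.mono_neutral_right[OF fS])
    show "(\<lambda>y. [y]) ` S1 \<subseteq> S" by (auto simp: S1_def S_def)
    show "\<forall>w\<in>S - (\<lambda>y. [y]) ` S1. (if length w = 1 then P w * h (hd w) [z] else 0) = 0"
    proof
      fix w assume w: "w \<in> S - (\<lambda>y. [y]) ` S1"
      show "(if length w = 1 then P w * h (hd w) [z] else 0) = 0"
      proof (cases "length w = 1")
        case True
        then obtain y where y: "w = [y]" by (cases w) auto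
        then have "y \<in> X" using sS[of w] w by auto
        then show ?thesis using w y by (auto simp: S1_def S_def)
      qed simp
    qed
  qed
  also have "\<dots> = (\<Sum>y\<in>S1. P [y] * h y [z])"
    by (subst sum.reindex) (auto simp: inj_on_def)
  also have "\<dots> = (\<Sum>y\<in>X. P [y] * h y [z])"
    by (rule sum.mono_neutral_left[OF fX]) (auto simp: S1_def)
  finally show ?thesis .
qed

lemma half:
  fixes g :: "'a \<Rightarrow> ('b,'f::field) ncp" and h :: "'b \<Rightarrow> ('a,'f) ncp"
    and V :: "'a set" and lev :: "'a \<Rightarrow> nat" and V' :: "'b set" and lev' :: "'b \<Rightarrow> nat"
  assumes lg: "layered_graph V E lev" "layered_graph V' E' lev'"
    and gin: "\<forall>x\<in>Vplus V lev. nc_in (Vplus V' lev') (g x)"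
    and comp: "\<forall>p. nc_in (Vplus V lev) p \<longrightarrow> nc_diff (nc_subst h (nc_subst g p)) p \<in> R_V V E lev"
    and hdeg: "\<forall>i. \<forall>p\<in>deg_span V' lev' i. \<exists>q\<in>deg_span V lev i. nc_diff (nc_subst h p) q \<in> R_V V E lev"
    and gfilt: "\<forall>i. \<forall>p\<in>filt_span V lev i. \<exists>q\<in>filt_span V' lev' i. nc_diff (nc_subst g p) q \<in> R_V V' E' lev'"
  shows "card {x\<in>Vplus V lev. lev x \<le> i} \<le> card {y\<in>Vplus V' lev'. lev' y \<le> i}"
proof -
  define X where "X = Vplus V lev"
  define X' where "X' = Vplus V' lev'"
  define A where "A = {x\<in>X. lev x \<le> i}"
  define A' where "A' = {y\<in>X'. lev' y \<le> i}"
  have fX: "finite X" using lg(1) by (auto simp: X_def Vplus_def layered_graph_def)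
  have fX': "finite X'" using lg(2) by (auto simp: X'_def Vplus_def layered_graph_def)
  have fA: "finite A" using fX by (simp add: A_def)
  have fA': "finite A'" using fX' by (simp add: A'_def)
  have h0: "\<forall>y\<in>X'. h y [] = 0"
  proof
    fix y assume y: "y \<in> X'"
    have "(nc_var y :: ('b,'f) ncp) \<in> deg_span V' lev' 1"
    proof -
      have "nc_in X' (nc_var y :: ('b,'f) ncp)" using y by (rule nc_in_var)
      moreover have "\<forall>w. (nc_var y w :: 'f) \<noteq> 0 \<longrightarrow> length w = 1" by (simp add: nc_var_def)
      ultimately show ?thesis by (simp add: deg_span_def X'_def)
    qed
    then obtain q where q: "q \<in> deg_span V lev 1" "nc_diff (nc_subst h (nc_var y)) q \<in> R_V V E lev"
      using hdeg by blast
    have "nc_diff (nc_subst h (nc_var y)) q [] = 0" by (rule R_low[OF q(2)]) simp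
    moreover have "q [] = 0" using q(1) by (auto simp: deg_span_def)
    ultimately show "h y [] = 0" by (simp add: subst_var nc_diff_def)
  qed
  have supp: "y \<in> A'" if x: "x \<in> A" and nz: "g x [y] \<noteq> 0" for x y
  proof -
    have "(nc_var x :: ('a,'f) ncp) \<in> filt_span V lev i"
    proof -
      have "nc_in X (nc_var x :: ('a,'f) ncp)" using x by (intro nc_in_var) (simp add: A_def)
      moreover have "\<forall>w. (nc_var x w :: 'f) \<noteq> 0 \<longrightarrow> sum_list (map lev w) \<le> i"
        using x by (simp add: nc_var_def A_def)
      ultimately show ?thesis by (simp add: filt_span_def X_def)
    qed
    then obtain q where q: "q \<in> filt_span V' lev' i" "nc_diff (nc_subst g (nc_var x)) q \<in> R_V V' E' lev'"
      using gfilt by blast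
    have "nc_diff (nc_subst g (nc_var x)) q [y] = 0" by (rule R_low[OF q(2)]) simp
    then have "q [y] \<noteq> 0" using nz by (simp add: subst_var nc_diff_def)
    then show ?thesis using q(1) by (auto simp: filt_span_def nc_in_def A'_def X'_def)
  qed
  have inv: "(\<Sum>y\<in>A'. g x [y] * h y [z]) = (if x = z then 1 else 0)"
    if x: "x \<in> A" and z: "z \<in> A" for x z
  proof -
    have xX: "x \<in> X" using x by (simp add: A_def)
    have P: "nc_in X (nc_var x :: ('a,'f) ncp)" using xX by (rule nc_in_var)
    have "nc_diff (nc_subst h (nc_subst g (nc_var x))) (nc_var x) \<in> R_V V E lev"
      using comp P by (simp add: X_def)
    then have "nc_diff (nc_subst h (nc_subst g (nc_var x))) (nc_var x) [z] = 0"
      by (rule R_low) simp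
    then have "nc_subst h (g x) [z] = nc_var x [z]" by (simp add: subst_var nc_diff_def)
    moreover have "nc_subst h (g x) [z] = (\<Sum>y\<in>X'. g x [y] * h y [z])"
      using gin xX fX' h0 by (intro subst_lin) (auto simp: X_def X'_def)
    moreover have "(\<Sum>y\<in>X'. g x [y] * h y [z]) = (\<Sum>y\<in>A'. g x [y] * h y [z])"
      using supp[OF x] by (intro sum.mono_neutral_right[OF fX']) (auto simp: A'_def)
    ultimately show ?thesis by (auto simp: nc_var_def)
  qed
  have "card A \<le> card A'"
    by (rule card_le_lin[where C = "\<lambda>x y. g x [y]" and D = "\<lambda>y z. h y [z]", OF fA fA' supp inv])
  then show ?thesis by (simp add: A_def A'_def X_def X'_def)
qed

theorem mainTheorem3:
  fixes V :: "'a set" and E :: "('a \<times> 'a) set" and lev :: "'a \<Rightarrow> nat"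
    and V' :: "'b set" and E' :: "('b \<times> 'b) set" and lev' :: "'b \<Rightarrow> nat"
  assumes "layered_graph V E lev" and "unique_min V lev"
    and "layered_graph V' E' lev'" and "unique_min V' lev'"
    and "sim_A TYPE('f::field) V E lev V' E' lev'"
  shows "\<forall>i::nat. card (level V lev i) = card (level V' lev' i)"
proof
  fix i :: nat
  obtain g :: "'a \<Rightarrow> ('b,'f) ncp" and h :: "'b \<Rightarrow> ('a,'f) ncp" where
    G: "(\<forall>x\<in>Vplus V lev. nc_in (Vplus V' lev') (g x))"
      "(\<forall>x\<in>Vplus V' lev'. nc_in (Vplus V lev) (h x))"
      "(\<forall>p. nc_in (Vplus V lev) p \<longrightarrow> nc_diff (nc_subst h (nc_subst g p)) p \<in> R_V V E lev)"
      "(\<forall>p. nc_in (Vplus V' lev') p \<longrightarrow> nc_diff (nc_subst g (nc_subst h p)) p \<in> R_V V' E' lev')"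
      "(\<forall>i. \<forall>p\<in>deg_span V lev i. \<exists>q\<in>deg_span V' lev' i. nc_diff (nc_subst g p) q \<in> R_V V' E' lev')"
      "(\<forall>i. \<forall>p\<in>deg_span V' lev' i. \<exists>q\<in>deg_span V lev i. nc_diff (nc_subst h p) q \<in> R_V V E lev)"
      "(\<forall>i. \<forall>p\<in>filt_span V lev i. \<exists>q\<in>filt_span V' lev' i. nc_diff (nc_subst g p) q \<in> R_V V' E' lev')"
      "(\<forall>i. \<forall>p\<in>filt_span V' lev' i. \<exists>q\<in>filt_span V lev i. nc_diff (nc_subst h p) q \<in> R_V V E lev)"
    using assms(5) unfolding sim_A_def by blast
  have eq: "card {x\<in>Vplus V lev. lev x \<le> k} = card {y\<in>Vplus V' lev'. lev' y \<le> k}" for k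
  proof (rule antisym)
    show "card {x\<in>Vplus V lev. lev x \<le> k} \<le> card {y\<in>Vplus V' lev'. lev' y \<le> k}"
      by (rule half[OF assms(1) assms(3) G(1) G(3) G(6) G(7)])
    show "card {y\<in>Vplus V' lev'. lev' y \<le> k} \<le> card {x\<in>Vplus V lev. lev x \<le> k}"
      by (rule half[OF assms(3) assms(1) G(2) G(4) G(5) G(8)])
  qed
  show "card (level V lev i) = card (level V' lev' i)"
  proof (cases i)
    case 0 then show ?thesis using assms(2,4) by (simp add: unique_min_def)
  next
    case (Suc k)
    have fV: "finite V" "finite V'" using assms(1,3) by (auto simp: layered_graph_def)
    have d: "level V lev (Suc k) = {x\<in>Vplus V lev. lev x \<le> Suc k} - {x\<in>Vplus V lev. lev x \<le> k}"
      by (auto simp: level_def Vplus_def)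
    have d': "level V' lev' (Suc k) = {x\<in>Vplus V' lev'. lev' x \<le> Suc k} - {x\<in>Vplus V' lev'. lev' x \<le> k}"
      by (auto simp: level_def Vplus_def)
    have c: "card (level V lev (Suc k)) = card {x\<in>Vplus V lev. lev x \<le> Suc k} - card {x\<in>Vplus V lev. lev x \<le> k}"
      unfolding d using fV(1) by (intro card_Diff_subset) (auto simp: Vplus_def)
    have c': "card (level V' lev' (Suc k)) = card {x\<in>Vplus V' lev'. lev' x \<le> Suc k} - card {x\<in>Vplus V' lev'. lev' x \<le> k}"
      unfolding d' using fV(2) by (intro card_Diff_subset) (auto simp: Vplus_def)
    show ?thesis using c c' eq[of k] eq[of "Suc k"] Suc by simp
  qed
qed
end
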